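(* Let $S=[a+1,a+m]$ with $a+m\le n$ and let $r\ge0$. Let $c_1,\dots,c_{r+1}\in S$, let $\lambda=(\lambda_1,\dots,\lambda_d)$ be a composition of $r+1$ with partial sums $p_j=\sum_{i=1}^j\lambda_i$ ($p_0=0$), let $\gamma_1,\dots,\gamma_d$ be nonnegative integers with $\gamma_j\ge\gamma_{j-1}+\lambda_{j-1}$ for $j\ge2$, set $\delta_j=k-\lambda_j-\gamma_j$, and let $a_{j,i},b_{j,i}\in[n]$ be arbitrary. Then the polynomial $$\sum_{\sigma\in\mathfrak S_{r+1}}\operatorname{sign}(\sigma)\prod_{j=1}^d[a_{j,1},\dots,a_{j,\gamma_j},c_{\sigma(p_{j-1}+1)},\dots,c_{\sigma(p_j)},b_{j,1},\dots,b_{j,\delta_j}]$$ vanishes on $X_{S\le r}$, i.e. lies in the ideal $\mathcal J_{S\le r}$.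
   Context: Let $\Bbbk$ be algebraically closed of characteristic $0$, $1\le k<n$. $R(k,n)=\Bbbk[[\mathbf a]:\mathbf a\in\binom{[n]}{k}]$ is the polynomial ring in Plücker variables. For a sequence $x_1,\dots,x_k$ in $[n]$, $[x_1,\dots,x_k]$ is $0$ if two entries coincide and otherwise $\operatorname{sign}(\tau)[\{x_1,\dots,x_k\}]$, $\tau$ the sorting permutation (so it represents the $k\times k$ minor on columns $x_1,\dots,x_k$ in that order). For $S\subseteq[n]$, $r\ge0$, $X_{S\le r}=\{V\in\mathrm{Gr}(k,n):\text{the columns indexed by }S\text{ of a matrix with row span }V\text{ have rank}\le r\}$, and $\mathcal J_{S\le r}\subseteq R(k,n)$ is its defining ideal under the Plücker embedding. *)

theory Defs
  imports "Jordan_Normal_Form.Determinant" "Jordan_Normal_Form.DL_Rank_Submatrix"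
    "HOL-Computational_Algebra.Polynomial"
begin

definition alg_closed_field :: "'a::field itself \<Rightarrow> bool" where
  "alg_closed_field _ \<longleftrightarrow> (\<forall>p::'a poly. degree p \<ge> 1 \<longrightarrow> (\<exists>x. poly p x = 0))"

text \<open>Points of Gr(k,n) are represented by k x n matrices of full rank k (row span V).
  Columns are indexed 0..n-1; the paper's column x in [n] = {1..n} is column x-1.\<close>

text \<open>The bracket [x_1,...,x_k] evaluated at (the Pluecker coordinates of) the row span of M:
  the k x k minor of M on the columns x_1,...,x_k taken in that order.\<close>
definition bracket :: "'a::comm_ring_1 mat \<Rightarrow> nat list \<Rightarrow> 'a" where
  "bracket M xs = det (mat (dim_row M) (dim_row M) (\<lambda>(i,j). M $$ (i, xs ! j - 1)))"

definition in_X :: "nat \<Rightarrow> nat \<Rightarrow> nat set \<Rightarrow> nat \<Rightarrow> 'a::field mat \<Rightarrow> bool" where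
  "in_X k n S r M \<longleftrightarrow> dim_row M = k \<and> dim_col M = n \<and> vec_space.rank k M = k \<and>
     vec_space.rank k (submatrix M UNIV {j. Suc j \<in> S}) \<le> r"

definition psum :: "nat list \<Rightarrow> nat \<Rightarrow> nat" where
  "psum lam j = sum_list (take j lam)"

text \<open>The j-th factor's column sequence (j 0-indexed, j < d):
  a_{j,1..gamma_j}, c_{sigma(p_{j-1}+1)},...,c_{sigma(p_j)}, b_{j,1..delta_j}.
  Here c and sigma are 0-indexed (sigma permutes {0..<r+1}).\<close>
definition block_seq :: "nat \<Rightarrow> nat list \<Rightarrow> nat list \<Rightarrow> (nat \<Rightarrow> nat \<Rightarrow> nat) \<Rightarrow>
    (nat \<Rightarrow> nat \<Rightarrow> nat) \<Rightarrow> (nat \<Rightarrow> nat) \<Rightarrow> (nat \<Rightarrow> nat) \<Rightarrow> nat \<Rightarrow> nat list" where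
  "block_seq k lam gam A B c \<sigma> j =
     map (A j) [0..<gam ! j] @ map (\<lambda>i. c (\<sigma> i)) [psum lam j..<psum lam (Suc j)]
     @ map (B j) [0..<k - lam ! j - gam ! j]"

definition the_poly_at :: "nat \<Rightarrow> nat \<Rightarrow> nat list \<Rightarrow> nat list \<Rightarrow> (nat \<Rightarrow> nat \<Rightarrow> nat) \<Rightarrow>
    (nat \<Rightarrow> nat \<Rightarrow> nat) \<Rightarrow> (nat \<Rightarrow> nat) \<Rightarrow> 'a::comm_ring_1 mat \<Rightarrow> 'a" where
  "the_poly_at k r lam gam A B c M =
     (\<Sum>\<sigma> \<in> {\<sigma>. \<sigma> permutes {0..<Suc r}}.
        signof \<sigma> * (\<Prod>j<length lam. bracket M (block_seq k lam gam A B c \<sigma> j)))"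

end

theory Submission
  imports Defs
begin

lemma det_col_lin:
  fixes A :: "'a::comm_ring_1 mat" and Bs :: "'b \<Rightarrow> 'a mat"
  assumes A: "A \<in> carrier_mat n n" and B: "\<And>l. l \<in> L \<Longrightarrow> Bs l \<in> carrier_mat n n"
    and cc: "cc < n" and fin: "finite L"
    and same: "\<And>l t j. l \<in> L \<Longrightarrow> t < n \<Longrightarrow> j < n \<Longrightarrow> j \<noteq> cc \<Longrightarrow> Bs l $$ (t,j) = A $$ (t,j)"
    and lin: "\<And>t. t < n \<Longrightarrow> A $$ (t,cc) = (\<Sum>l\<in>L. \<beta> l * Bs l $$ (t,cc))"
  shows "det A = (\<Sum>l\<in>L. \<beta> l * det (Bs l))"
proof -
  have cof: "cofactor (Bs l) t cc = cofactor A t cc" if "l \<in> L" "t < n" for l t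
  proof -
    have "mat_delete (Bs l) t cc = mat_delete A t cc"
      unfolding mat_delete_def using A B[OF that(1)] same[OF that(1)] cc
      by (intro eq_matI) auto
    then show ?thesis unfolding cofactor_def by simp
  qed
  have "det A = (\<Sum>t<n. A $$ (t,cc) * cofactor A t cc)"
    by (rule laplace_expansion_column[OF A cc])
  also have "\<dots> = (\<Sum>t<n. \<Sum>l\<in>L. \<beta> l * (Bs l $$ (t,cc) * cofactor (Bs l) t cc))"
    by (intro sum.cong refl) (simp add: lin cof sum_distrib_right mult.assoc)
  also have "\<dots> = (\<Sum>l\<in>L. \<beta> l * (\<Sum>t<n. Bs l $$ (t,cc) * cofactor (Bs l) t cc))"
    by (subst sum.swap) (simp add: sum_distrib_left)
  also have "\<dots> = (\<Sum>l\<in>L. \<beta> l * det (Bs l))"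
    by (intro sum.cong refl) (simp add: laplace_expansion_column[OF B cc])
  finally show ?thesis .
qed

context
  fixes k r :: nat and lam gam :: "nat list" and A B :: "nat \<Rightarrow> nat \<Rightarrow> nat"
    and M :: "'a::field_char_0 mat"
begin

definition Dm :: "(nat \<Rightarrow> nat \<Rightarrow> 'a) \<Rightarrow> (nat \<Rightarrow> nat) \<Rightarrow> nat \<Rightarrow> 'a mat" where
  "Dm w \<sigma> j = mat k k (\<lambda>(t,col). if gam!j \<le> col \<and> col < gam!j + lam!j
      then w (\<sigma> (psum lam j + (col - gam!j))) t
      else M $$ (t, block_seq k lam gam A B (\<lambda>_. 0) id j ! col - 1))"

definition Gen :: "(nat \<Rightarrow> nat \<Rightarrow> 'a) \<Rightarrow> 'a" where
  "Gen w = (\<Sum>\<sigma> \<in> {\<sigma>. \<sigma> permutes {0..<Suc r}}. signof \<sigma> * (\<Prod>j<length lam. det (Dm w \<sigma> j)))"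

lemma Gen_cong:
  assumes "\<And>x t. t < k \<Longrightarrow> w x t = w' x t"
  shows "Gen w = Gen w'"
proof -
  have "Dm w \<sigma> j = Dm w' \<sigma> j" for \<sigma> j
    unfolding Dm_def using assms by (intro eq_matI) auto
  then show ?thesis unfolding Gen_def by simp
qed

lemma Gen_alt:
  assumes i: "i < Suc r" and l: "l < Suc r" and il: "i \<noteq> l"
    and eq: "\<And>t. t < k \<Longrightarrow> w i t = w l t"
  shows "Gen w = 0"
proof -
  define \<tau> where "\<tau> = Transposition.transpose i l"
  have tp: "\<tau> permutes {0..<Suc r}" unfolding \<tau>_def using i l by (intro permutes_swap_id) auto
  have st: "signof \<tau> = (-1::'a)" unfolding \<tau>_def using il by (simp add: sign_swap_id)
  have tt: "\<tau> \<circ> (\<tau> \<circ> \<sigma>) = \<sigma>" for \<sigma> unfolding \<tau>_def by (auto simp: fun_eq_iff)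
  have wt: "w (\<tau> x) t = w x t" if "t < k" for x t
    unfolding \<tau>_def using eq[OF that] by (cases "x = i"; cases "x = l") auto
  have dm: "Dm w (\<tau> \<circ> \<sigma>) j = Dm w \<sigma> j" for \<sigma> j
    unfolding Dm_def using wt by (intro eq_matI) auto
  define f where "f \<sigma> = signof \<sigma> * (\<Prod>j<length lam. det (Dm w \<sigma> j))" for \<sigma>
  have "Gen w = (\<Sum>\<sigma> \<in> {\<sigma>. \<sigma> permutes {0..<Suc r}}. f (\<tau> \<circ> \<sigma>))"
    unfolding Gen_def f_def[symmetric]
    by (rule sum.reindex_bij_witness[where i="\<lambda>\<sigma>. \<tau> \<circ> \<sigma>" and j="\<lambda>\<sigma>. \<tau> \<circ> \<sigma>"])
       (auto simp: tt permutes_compose[OF _ tp])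
  also have "\<dots> = (\<Sum>\<sigma> \<in> {\<sigma>. \<sigma> permutes {0..<Suc r}}. - f \<sigma>)"
    by (intro sum.cong refl) (simp add: f_def dm signof_compose[OF tp] st)
  also have "\<dots> = - Gen w" unfolding Gen_def f_def by (simp add: sum_negf)
  finally show ?thesis by simp
qed


lemma psum_Suc: "j < length lam \<Longrightarrow> psum lam (Suc j) = psum lam j + lam ! j"
  unfolding psum_def by (simp add: take_Suc_conv_app_nth)

lemma psum_mono: "j \<le> j' \<Longrightarrow> psum lam j \<le> psum lam j'"
proof -
  assume "j \<le> j'"
  then obtain e where "j' = j + e" by (metis le_add_diff_inverse)
  then show ?thesis unfolding psum_def by (simp add: take_add)
qed

lemma block_exists_aux: "d \<le> length lam \<Longrightarrow> q < psum lam d \<Longrightarrow> \<exists>j<d. psum lam j \<le> q \<and> q < psum lam (Suc j)"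
proof (induction d)
  case 0 then show ?case by (simp add: psum_def)
next
  case (Suc d)
  show ?case
  proof (cases "q < psum lam d")
    case True then show ?thesis using Suc by (metis Suc_leD less_SucI)
  next
    case False then show ?thesis using Suc by (metis lessI not_less)
  qed
qed

lemma block_unique:
  assumes "j < length lam" "j' < length lam"
    "psum lam j \<le> q" "q < psum lam (Suc j)" "psum lam j' \<le> q" "q < psum lam (Suc j')"
  shows "j = j'"
proof (rule ccontr)
  assume "j \<noteq> j'"
  then have "Suc j \<le> j' \<or> Suc j' \<le> j" by auto
  then show False using psum_mono assms by (meson le_trans not_le)
qed


lemma Gen_lin:
  assumes sl: "sum_list lam = Suc r" and lk: "\<forall>j < length lam. lam ! j + gam ! j \<le> k"
    and i: "i < Suc r" and fin: "finite L"
  shows "Gen (w(i := (\<lambda>t. \<Sum>l\<in>L. \<beta> l * h l t))) = (\<Sum>l\<in>L. \<beta> l * Gen (w(i := h l)))"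
proof -
  define w' where "w' = w(i := (\<lambda>t. \<Sum>l\<in>L. \<beta> l * h l t))"
  define wl where "wl l = w(i := h l)" for l
  define nd where "nd = length lam"
  have prod_eq: "(\<Prod>j<nd. det (Dm w' \<sigma> j)) = (\<Sum>l\<in>L. \<beta> l * (\<Prod>j<nd. det (Dm (wl l) \<sigma> j)))"
    if \<sigma>: "\<sigma> permutes {0..<Suc r}" for \<sigma>
  proof -
    define q where "q = Hilbert_Choice.inv \<sigma> i"
    have bij: "bij \<sigma>" using \<sigma> permutes_bij by blast
    have sq: "\<sigma> q = i" unfolding q_def using bij by (meson bij_inv_eq_iff)
    have qr: "q < Suc r" unfolding q_def using permutes_inv[OF \<sigma>] i
      by (metis atLeastLessThan_iff permutes_in_image zero_le)
    have "psum lam nd = Suc r" unfolding psum_def nd_def using sl by simp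
    then obtain j0 where j0: "j0 < nd" "psum lam j0 \<le> q" "q < psum lam (Suc j0)"
      using block_exists_aux[of nd q] qr nd_def by auto
    define col0 where "col0 = gam!j0 + (q - psum lam j0)"
    have ps0: "psum lam (Suc j0) = psum lam j0 + lam!j0" using psum_Suc j0 nd_def by simp
    have c0k: "col0 < k" unfolding col0_def using lk j0 ps0 nd_def by auto
    have hit: "j = j0 \<and> col = col0"
      if "j < nd" "gam!j \<le> col" "col < gam!j + lam!j" "\<sigma> (psum lam j + (col - gam!j)) = i" for j col
    proof -
      have "psum lam j + (col - gam!j) = q" using that(4) sq bij by (metis bij_pointE)
      moreover have "psum lam (Suc j) = psum lam j + lam!j" using psum_Suc that(1) nd_def by simp
      ultimately have "j = j0" using block_unique[of j j0 q] j0 that nd_def by auto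
      then show ?thesis using \<open>psum lam j + (col - gam!j) = q\<close> that unfolding col0_def by auto
    qed
    have other: "Dm w' \<sigma> j = Dm (wl l) \<sigma> j" if "j < nd" "j \<noteq> j0" for j l
      unfolding Dm_def w'_def wl_def using hit that by (intro eq_matI) auto
    have main: "det (Dm w' \<sigma> j0) = (\<Sum>l\<in>L. \<beta> l * det (Dm (wl l) \<sigma> j0))"
    proof (rule det_col_lin[where cc=col0])
      show "Dm w' \<sigma> j0 \<in> carrier_mat k k" unfolding Dm_def by simp
      show "Dm (wl l) \<sigma> j0 \<in> carrier_mat k k" for l unfolding Dm_def by simp
      show "col0 < k" by (rule c0k)
      show "finite L" by (rule fin)
      show "Dm (wl l) \<sigma> j0 $$ (t, j) = Dm w' \<sigma> j0 $$ (t, j)" if "t < k" "j < k" "j \<noteq> col0" for l t j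
        unfolding Dm_def w'_def wl_def using hit[of j0 j] that j0 by auto
      have in0: "gam!j0 \<le> col0 \<and> col0 < gam!j0 + lam!j0" unfolding col0_def using j0 ps0 by auto
      have ix: "psum lam j0 + (col0 - gam!j0) = q" unfolding col0_def using j0 by auto
      show "Dm w' \<sigma> j0 $$ (t, col0) = (\<Sum>l\<in>L. \<beta> l * Dm (wl l) \<sigma> j0 $$ (t, col0))" if "t < k" for t
        unfolding Dm_def w'_def wl_def using that c0k in0 ix sq by simp
    qed
    have "(\<Prod>j<nd. det (Dm w' \<sigma> j)) = det (Dm w' \<sigma> j0) * (\<Prod>j\<in>{..<nd}-{j0}. det (Dm w' \<sigma> j))"
      using j0 by (simp add: prod.remove)
    also have "\<dots> = (\<Sum>l\<in>L. \<beta> l * (det (Dm (wl l) \<sigma> j0) * (\<Prod>j\<in>{..<nd}-{j0}. det (Dm (wl l) \<sigma> j))))"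
      unfolding main sum_distrib_right
    proof (intro sum.cong refl)
      fix l assume "l \<in> L"
      have "(\<Prod>j\<in>{..<nd}-{j0}. det (Dm w' \<sigma> j)) = (\<Prod>j\<in>{..<nd}-{j0}. det (Dm (wl l) \<sigma> j))"
        using other by (intro prod.cong refl) auto
      then show "\<beta> l * det (Dm (wl l) \<sigma> j0) * (\<Prod>j\<in>{..<nd}-{j0}. det (Dm w' \<sigma> j)) =
        \<beta> l * (det (Dm (wl l) \<sigma> j0) * (\<Prod>j\<in>{..<nd}-{j0}. det (Dm (wl l) \<sigma> j)))"
        by (simp add: mult.assoc)
    qed
    also have "\<dots> = (\<Sum>l\<in>L. \<beta> l * (\<Prod>j<nd. det (Dm (wl l) \<sigma> j)))"
      using j0 by (simp add: prod.remove)
    finally show ?thesis .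
  qed
  have "Gen w' = (\<Sum>\<sigma> \<in> {\<sigma>. \<sigma> permutes {0..<Suc r}}. \<Sum>l\<in>L. \<beta> l * (signof \<sigma> * (\<Prod>j<nd. det (Dm (wl l) \<sigma> j))))"
    unfolding Gen_def nd_def[symmetric]
    by (intro sum.cong refl) (simp add: prod_eq sum_distrib_left mult.left_commute)
  also have "\<dots> = (\<Sum>l\<in>L. \<beta> l * Gen (wl l))"
    unfolding Gen_def nd_def[symmetric]
    by (subst sum.swap) (simp add: sum_distrib_left)
  finally show ?thesis unfolding w'_def wl_def .
qed


lemma bs_nth:
  assumes j: "j < length lam" and p: "p < k" and lk: "lam ! j + gam ! j \<le> k"
  shows "block_seq k lam gam A B c \<sigma> j ! p =
    (if p < gam!j then A j p else if p < gam!j + lam!j then c (\<sigma> (psum lam j + (p - gam!j)))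
     else B j (p - gam!j - lam!j))"
  using psum_Suc[OF j] p lk unfolding block_seq_def
  by (auto simp: nth_append)

lemma poly_Gen:
  assumes lk: "\<forall>j < length lam. lam ! j + gam ! j \<le> k" and dr: "dim_row M = k"
  shows "the_poly_at k r lam gam A B c M = Gen (\<lambda>l t. M $$ (t, c l - 1))"
  unfolding the_poly_at_def Gen_def
proof (intro sum.cong refl arg_cong2[where f="(*)"] prod.cong)
  fix \<sigma> j assume "j \<in> {..<length lam}"
  then have j: "j < length lam" by simp
  show "bracket M (block_seq k lam gam A B c \<sigma> j) = det (Dm (\<lambda>l t. M $$ (t, c l - 1)) \<sigma> j)"
    unfolding bracket_def Dm_def dr
    by (intro arg_cong[where f=det] eq_matI) (auto simp: bs_nth[OF j _ lk[rule_format, OF j]])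
qed

end


lemma col_in_sub:
  fixes M :: "'a::field mat"
  assumes x: "x \<in> J" "x < dim_col M"
  shows "col M x \<in> set (cols (submatrix M UNIV J))"
proof -
  define j' where "j' = card {a\<in>J. a < x}"
  have px: "pick J j' = x" unfolding j'_def using pick_card_in_set[OF x(1)] .
  have "{a\<in>J. a < x} \<subset> {j. j < dim_col M \<and> j \<in> J}" using x by auto
  then have j': "j' < card {j. j < dim_col M \<and> j \<in> J}" unfolding j'_def
    by (intro psubset_card_mono) auto
  have "col (submatrix M UNIV J) j' = col M x"
  proof (rule eq_vecI)
    show "dim_vec (col (submatrix M UNIV J) j') = dim_vec (col M x)" by (simp add: dim_submatrix)
    fix t assume "t < dim_vec (col M x)"
    then have t: "t < dim_row M" by simp
    have t': "t < card {i. i < dim_row M \<and> i \<in> UNIV}" using t by simp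
    show "col (submatrix M UNIV J) j' $ t = col M x $ t"
      using submatrix_index[OF t' j'] t x j' px by (simp add: dim_submatrix pick_UNIV)
  qed
  moreover have "j' < dim_col (submatrix M UNIV J)" using j' by (simp add: dim_submatrix)
  ultimately show ?thesis by (metis cols_length cols_nth nth_mem)
qed

theorem proposition5p1:
  fixes k n a m r :: nat
    and lam gam :: "nat list"
    and c :: "nat \<Rightarrow> nat"
    and A B :: "nat \<Rightarrow> nat \<Rightarrow> nat"
    and M :: "'a::field_char_0 mat"
  assumes "alg_closed_field TYPE('a)"
    and "1 \<le> k" and "k < n"
    and "a + m \<le> n"
    and "\<forall>i < Suc r. c i \<in> {a+1..a+m}"
    and "lam \<noteq> []" and "\<forall>x \<in> set lam. x > 0" and "sum_list lam = Suc r"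
    and "length gam = length lam"
    and "\<forall>j. 1 \<le> j \<and> j < length lam \<longrightarrow> gam ! j \<ge> gam ! (j-1) + lam ! (j-1)"
    and "\<forall>j < length lam. lam ! j + gam ! j \<le> k"
    and "\<forall>j < length lam. \<forall>i < gam ! j. A j i \<in> {1..n}"
    and "\<forall>j < length lam. \<forall>i < k - lam ! j - gam ! j. B j i \<in> {1..n}"
    and "in_X k n {a+1..a+m} r M"
  shows "the_poly_at k r lam gam A B c M = 0"
proof -
  note cS = assms(5) and sl = assms(8) and lk = assms(11)
  have dr: "dim_row M = k" "dim_col M = n" and rk: "vec_space.rank k (submatrix M UNIV {j. Suc j \<in> {a+1..a+m}}) \<le> r"
    using assms(14) unfolding in_X_def by auto
  define w0 where "w0 = (\<lambda>l t. M $$ (t, c l - 1))"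
  have P: "the_poly_at k r lam gam A B c M = Gen k r lam gam A B M w0"
    unfolding w0_def by (rule poly_Gen[OF lk dr(1)])
  define vv where "vv l = col M (c l - 1)" for l
  have cn: "c l - 1 < n \<and> c l \<ge> 1" if "l < Suc r" for l
  proof -
    have "c l \<in> {a+1..a+m}" using cS that by blast
    then show ?thesis using assms(4) by auto
  qed
  have vvw: "vv l $ t = w0 l t" if "l < Suc r" "t < k" for l t
    unfolding vv_def w0_def using that cn[OF that(1)] dr by simp
  show ?thesis
  proof (cases "\<exists>i l. i < Suc r \<and> l < Suc r \<and> i \<noteq> l \<and> vv i = vv l")
    case True
    then obtain i l where il: "i < Suc r" "l < Suc r" "i \<noteq> l" "vv i = vv l" by blast
    have "Gen k r lam gam A B M w0 = 0"
    proof (rule Gen_alt[OF il(1-3)])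
      fix t assume t: "t < k"
      show "w0 i t = w0 l t" using vvw[OF il(1) t] vvw[OF il(2) t] il(4) by simp
    qed
    then show ?thesis using P by simp
  next
    case False
    define J where "J = {j. Suc j \<in> {a+1..a+m}}"
    define Sub where "Sub = submatrix M UNIV J"
    define vs where "vs = map vv [0..<Suc r]"
    define Wm where "Wm = mat_of_cols k vs"
    have vsc: "set vs \<subseteq> carrier_vec k"
    proof
      fix x assume "x \<in> set vs"
      then obtain l where "x = vv l" unfolding vs_def set_map by blast
      then show "x \<in> carrier_vec k" unfolding vv_def carrier_vec_def using dr by simp
    qed
    have cW: "cols Wm = vs" unfolding Wm_def using vsc by (simp add: cols_mat_of_cols)
    have "inj_on vv {0..<Suc r}"
    proof (rule inj_onI)
      fix x y assume "x \<in> {0..<Suc r}" "y \<in> {0..<Suc r}" "vv x = vv y"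
      then show "x = y" using False by auto
    qed
    then have dist: "distinct vs" unfolding vs_def by (metis distinct_map distinct_upt set_upt)
    have Wc: "Wm \<in> carrier_mat k (Suc r)" unfolding Wm_def vs_def mat_of_cols_def carrier_mat_def by (simp del: upt_Suc)
    have "{i. i < k \<and> i \<in> (UNIV::nat set)} = {..<k}" by auto
    then have "dim_row Sub = k" unfolding Sub_def dim_submatrix(1) dr(1) by simp
    then have Subc: "Sub \<in> carrier_mat k (dim_col Sub)" by (intro carrier_matI) auto
    have sub: "set (cols Wm) \<subseteq> set (cols Sub)"
    proof
      fix x assume "x \<in> set (cols Wm)"
      then obtain l where l: "l < Suc r" "x = vv l" unfolding cW vs_def by (auto simp del: upt_Suc)
      have "c l - 1 \<in> J" unfolding J_def using cS l(1) cn[OF l(1)] by auto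
      then show "x \<in> set (cols Sub)" unfolding l(2) vv_def Sub_def
        using col_in_sub[of "c l - 1" J M] cn[OF l(1)] dr by auto
    qed
    have "module.lin_dep class_ring (module_vec TYPE('a) k) (set (cols Wm))"
    proof (rule ccontr)
      assume "\<not> ?thesis"
      from vec_space.rank_ge_card_indpt[OF Subc sub this]
      have "card (set (cols Wm)) \<le> r" using rk unfolding Sub_def J_def by simp
      moreover have "card (set (cols Wm)) = Suc r" unfolding cW using distinct_card[OF dist]
        unfolding vs_def by (simp del: upt_Suc)
      ultimately show False by simp
    qed
    then obtain v where v: "v \<in> carrier_vec (Suc r)" "v \<noteq> 0\<^sub>v (Suc r)" "Wm *\<^sub>v v = 0\<^sub>v k"
      using vec_space.lin_depE[OF Wc] dist cW by metis
    have "\<exists>i. i < Suc r \<and> v $ i \<noteq> 0"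
    proof (rule ccontr)
      assume "\<not> ?thesis"
      then have "v = 0\<^sub>v (Suc r)" using v(1) by (intro eq_vecI) auto
      then show False using v(2) by simp
    qed
    then obtain i where i: "i < Suc r" "v $ i \<noteq> 0" by blast
    have rowt: "(\<Sum>l<Suc r. w0 l t * v $ l) = 0" if t: "t < k" for t
    proof -
      have "(Wm *\<^sub>v v) $ t = 0" using v(3) t by simp
      moreover have "(Wm *\<^sub>v v) $ t = (\<Sum>l<Suc r. w0 l t * v $ l)"
      proof -
        have "(Wm *\<^sub>v v) $ t = row Wm t \<bullet> v" using t Wc by simp
        also have "\<dots> = (\<Sum>l\<in>{0..<Suc r}. row Wm t $ l * v $ l)"
          unfolding scalar_prod_def using v(1) by simp
        also have "\<dots> = (\<Sum>l<Suc r. w0 l t * v $ l)" unfolding lessThan_atLeast0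
        proof (intro sum.cong refl)
          fix l assume "l \<in> {0..<Suc r}"
          then have l: "l < Suc r" by simp
          have "row Wm t $ l = Wm $$ (t, l)" using l t Wc by simp
          also have "\<dots> = vs ! l $ t" unfolding Wm_def mat_of_cols_def using l t
            unfolding vs_def by (simp del: upt_Suc)
          also have "\<dots> = w0 l t" unfolding vs_def using vvw[OF l t] l by (simp del: upt_Suc)
          finally show "row Wm t $ l * v $ l = w0 l t * v $ l" by simp
        qed
        finally show ?thesis .
      qed
      ultimately show ?thesis by simp
    qed
    define L where "L = {0..<Suc r} - {i}"
    define \<beta> where "\<beta> l = - (v $ l) / (v $ i)" for l
    have lc: "w0 i t = (\<Sum>l\<in>L. \<beta> l * w0 l t)" if t: "t < k" for t
    proof -
      have "(\<Sum>l<Suc r. w0 l t * v $ l) = w0 i t * v $ i + (\<Sum>l\<in>L. w0 l t * v $ l)"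
        unfolding L_def lessThan_atLeast0 using i by (intro sum.remove) auto
      then have "w0 i t * v $ i = - (\<Sum>l\<in>L. w0 l t * v $ l)" using rowt[OF t] by (simp add: eq_neg_iff_add_eq_0)
      then have "w0 i t = - (\<Sum>l\<in>L. w0 l t * v $ l) / v $ i" using i(2) by (simp add: field_simps)
      then show ?thesis unfolding \<beta>_def by (simp add: sum_divide_distrib sum_negf field_simps)
    qed
    have "Gen k r lam gam A B M w0 = Gen k r lam gam A B M (w0(i := (\<lambda>t. \<Sum>l\<in>L. \<beta> l * w0 l t)))"
      by (rule Gen_cong) (simp add: lc)
    also have "\<dots> = (\<Sum>l\<in>L. \<beta> l * Gen k r lam gam A B M (w0(i := w0 l)))"
      by (rule Gen_lin[OF sl lk i(1)]) (simp add: L_def)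
    also have "\<dots> = 0"
    proof (intro sum.neutral ballI)
      fix l assume "l \<in> L"
      then have l: "l < Suc r" "l \<noteq> i" unfolding L_def by auto
      have "Gen k r lam gam A B M (w0(i := w0 l)) = 0"
        by (rule Gen_alt[OF i(1) l(1) l(2)[symmetric]]) (simp add: l(2)[symmetric])
      then show "\<beta> l * Gen k r lam gam A B M (w0(i := w0 l)) = 0" by simp
    qed
    finally show ?thesis using P by simp
  qed
qed

end
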